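(* Let $(X,d,f)$ be a dynamical system and $\mathcal{A}=\{\mathcal{U}_n\}_{n\in\mathbb{N}}$ a tame defining sequence of $(X,d)$. Then $f$ has the finite shadowing property if and only if for every $m\in\mathbb{N}$ there is $n>m$ such that $\mathcal{PO}(\mathcal{U}_n)\hookrightarrow\mathcal{O}(\mathcal{U}_m)$, i.e. for every $(O_i)\in\mathcal{PO}(\mathcal{U}_n)$ the unique $(V_i)\in\mathcal{U}_m^{\mathbb{N}}$ with $O_i\subseteq V_i$ for all $i$ belongs to $\mathcal{O}(\mathcal{U}_m)$.
   Context: Spaces are nonempty separable metrizable; $d$ is admissible and $f$ continuous. A partition is a cover by pairwise disjoint nonempty clopen sets. A defining sequence is a sequence $\{\mathcal{U}_n\}$ of partitions, each refining the previous, whose union is a basis; tame if $\sup\{\operatorname{diam}O:O\in\mathcal{U}_n\}\to0$ and for each $n$ there is $\rho_n>0$ such that points in distinct elements of $\mathcal{U}_n$ have distance $\ge\rho_n$. $\mathcal{O}(\mathcal{U})=\{(O_i)\in\mathcal{U}^{\mathbb{N}}:\forall k\ \exists x,\ f^i(x)\in O_i\ (0\le i\le k)\}$; $\mathcal{PO}(\mathcal{U})=\{(O_i)\in\mathcal{U}^{\mathbb{N}}: f(O_i)\cap O_{i+1}\ne\emptyset\ \forall i\}$. Finite shadowing property: for every $\varepsilon>0$ there is $\delta>0$ such that every finite sequence $(x_i)_{i=0}^k$ with $d(f(x_i),x_{i+1})<\delta$ admits $z$ with $d(f^i(z),x_i)<\varepsilon$ for $0\le i\le k$. *)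

theory Defs
  imports "HOL-Analysis.Analysis"
begin

text \<open>Dynamical system (X,d,f): X a nonempty separable subset of a metric space
  (metric = dist restricted to X), f a continuous self-map of X.\<close>
definition dyn_system :: "'a::metric_space set \<Rightarrow> ('a \<Rightarrow> 'a) \<Rightarrow> bool" where
  "dyn_system X f \<longleftrightarrow> X \<noteq> {} \<and> (\<exists>C. countable C \<and> C \<subseteq> X \<and> X \<subseteq> closure C)
     \<and> continuous_on X f \<and> f ` X \<subseteq> X"

definition is_partition :: "'a::topological_space set \<Rightarrow> 'a set set \<Rightarrow> bool" where
  "is_partition X P \<longleftrightarrow> \<Union>P = X
     \<and> (\<forall>A\<in>P. A \<noteq> {} \<and> openin (top_of_set X) A \<and> closedin (top_of_set X) A)
     \<and> (\<forall>A\<in>P. \<forall>B\<in>P. A \<noteq> B \<longrightarrow> A \<inter> B = {})"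

definition refines :: "'a set set \<Rightarrow> 'a set set \<Rightarrow> bool" where
  "refines P Q \<longleftrightarrow> (\<forall>A\<in>P. \<exists>V\<in>Q. A \<subseteq> V)"

definition defining_sequence :: "'a::topological_space set \<Rightarrow> (nat \<Rightarrow> 'a set set) \<Rightarrow> bool" where
  "defining_sequence X U \<longleftrightarrow> (\<forall>n. is_partition X (U n))
     \<and> (\<forall>n. refines (U (Suc n)) (U n))
     \<and> (\<forall>W. openin (top_of_set X) W \<longrightarrow> (\<forall>x\<in>W. \<exists>n. \<exists>A\<in>U n. x \<in> A \<and> A \<subseteq> W))"

definition tame_defining_sequence :: "'a::metric_space set \<Rightarrow> (nat \<Rightarrow> 'a set set) \<Rightarrow> bool" where
  "tame_defining_sequence X U \<longleftrightarrow> defining_sequence X U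
     \<and> (\<forall>\<epsilon>>0. \<exists>N. \<forall>n\<ge>N. \<forall>A\<in>U n. \<forall>x\<in>A. \<forall>y\<in>A. dist x y \<le> \<epsilon>)
     \<and> (\<forall>n. \<exists>\<rho>>0. \<forall>A\<in>U n. \<forall>B\<in>U n. A \<noteq> B \<longrightarrow>
            (\<forall>x\<in>A. \<forall>y\<in>B. dist x y \<ge> \<rho>))"

definition orbit_seqs :: "'a set \<Rightarrow> ('a \<Rightarrow> 'a) \<Rightarrow> 'a set set \<Rightarrow> (nat \<Rightarrow> 'a set) set" where
  "orbit_seqs X f P = {A. (\<forall>i. A i \<in> P) \<and>
     (\<forall>k. \<exists>x\<in>X. \<forall>i\<le>k. (f ^^ i) x \<in> A i)}"

definition pseudo_orbit_seqs :: "('a \<Rightarrow> 'a) \<Rightarrow> 'a set set \<Rightarrow> (nat \<Rightarrow> 'a set) set" where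
  "pseudo_orbit_seqs f P = {A. (\<forall>i. A i \<in> P) \<and> (\<forall>i. f ` (A i) \<inter> A (Suc i) \<noteq> {})}"

definition finite_shadowing :: "'a::metric_space set \<Rightarrow> ('a \<Rightarrow> 'a) \<Rightarrow> bool" where
  "finite_shadowing X f \<longleftrightarrow> (\<forall>\<epsilon>>0. \<exists>\<delta>>0. \<forall>k (x::nat \<Rightarrow> 'a).
     (\<forall>i\<le>k. x i \<in> X) \<and> (\<forall>i<k. dist (f (x i)) (x (Suc i)) < \<delta>) \<longrightarrow>
     (\<exists>z\<in>X. \<forall>i\<le>k. dist ((f ^^ i) z) (x i) < \<epsilon>))"

end

theory Submission
  imports Defs
begin

lemma ds_ref: "defining_sequence X U \<Longrightarrow> refines (U (Suc n)) (U n)"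
  by (simp add: defining_sequence_def)

lemma ds_part: "defining_sequence X U \<Longrightarrow> \<Union>(U n) = X"
  by (simp add: defining_sequence_def is_partition_def)

lemma ds_refines_add:
  assumes "defining_sequence X U"
  shows "A \<in> U (m + d) \<Longrightarrow> \<exists>V\<in>U m. A \<subseteq> V"
proof (induction d arbitrary: A)
  case 0
  then show ?case by auto
next
  case (Suc d)
  have r: "refines (U (Suc (m + d))) (U (m + d))" using assms by (rule ds_ref)
  have "A \<in> U (Suc (m + d))" using Suc.prems by simp
  then obtain B where B: "B \<in> U (m + d)" "A \<subseteq> B"
    using r unfolding refines_def by (meson bexE)
  obtain V where "V \<in> U m" "B \<subseteq> V" using Suc.IH[OF B(1)] by (meson bexE)
  then show ?case using B(2) by (meson order_trans)
qed

lemma ds_refines_le: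
  assumes "defining_sequence X U" "m \<le> n" "A \<in> U n"
  shows "\<exists>V\<in>U m. A \<subseteq> V"
proof -
  obtain d where "n = m + d" using assms(2) le_Suc_ex by blast
  then show ?thesis using ds_refines_add[OF assms(1)] assms(3) by blast
qed

lemma ds_cover:
  assumes "defining_sequence X U" "x \<in> X"
  shows "\<exists>A\<in>U n. x \<in> A"
proof -
  have "\<Union>(U n) = X" using assms(1) by (rule ds_part)
  with assms(2) show ?thesis by blast
qed

lemma ds_sub:
  assumes "defining_sequence X U" "A \<in> U n"
  shows "A \<subseteq> X"
proof -
  have "\<Union>(U n) = X" using assms(1) by (rule ds_part)
  with assms(2) show ?thesis by blast
qed

lemma funpow_in:
  assumes "f ` X \<subseteq> X" "x \<in> X"
  shows "(f ^^ i) x \<in> X"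
  using assms by (induction i) auto

lemma sep_same:
  assumes ds: "defining_sequence X U"
    and sep: "\<forall>A\<in>U n. \<forall>B\<in>U n. A \<noteq> B \<longrightarrow> (\<forall>x\<in>A. \<forall>y\<in>B. dist x y \<ge> \<rho>)"
    and "y \<in> X" "x \<in> B" "B \<in> U n" "dist y x < \<rho>"
  shows "y \<in> B"
proof -
  obtain W where W: "W \<in> U n" "y \<in> W" using ds_cover[OF ds \<open>y \<in> X\<close>] by blast
  show ?thesis
  proof (cases "W = B")
    case True with W show ?thesis by simp
  next
    case False
    with sep W assms(4,5) have "dist y x \<ge> \<rho>" by blast
    with assms(6) show ?thesis by simp
  qed
qed

theorem proposition4p14:
  fixes X :: "'a::metric_space set" and f :: "'a \<Rightarrow> 'a" and U :: "nat \<Rightarrow> 'a set set"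
  assumes "dyn_system X f"
    and "tame_defining_sequence X U"
  shows "finite_shadowing X f \<longleftrightarrow>
    (\<forall>m. \<exists>n>m. \<forall>A\<in>pseudo_orbit_seqs f (U n). \<forall>V.
        (\<forall>i. V i \<in> U m \<and> A i \<subseteq> V i) \<longrightarrow> V \<in> orbit_seqs X f (U m))"
proof -
  have fX: "f ` X \<subseteq> X" using assms(1) by (simp add: dyn_system_def)
  have ds: "defining_sequence X U" using assms(2) by (simp add: tame_defining_sequence_def)
  have diam: "\<forall>\<epsilon>>0. \<exists>N. \<forall>n\<ge>N. \<forall>A\<in>U n. \<forall>x\<in>A. \<forall>y\<in>A. dist x y \<le> \<epsilon>"
    using assms(2) by (simp add: tame_defining_sequence_def)
  have sepa: "\<forall>n. \<exists>\<rho>>0. \<forall>A\<in>U n. \<forall>B\<in>U n. A \<noteq> B \<longrightarrow> (\<forall>x\<in>A. \<forall>y\<in>B. dist x y \<ge> \<rho>)"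
    using assms(2) by (simp add: tame_defining_sequence_def)
  show ?thesis
  proof
    assume fs: "finite_shadowing X f"
    show "\<forall>m. \<exists>n>m. \<forall>A\<in>pseudo_orbit_seqs f (U n). \<forall>V.
        (\<forall>i. V i \<in> U m \<and> A i \<subseteq> V i) \<longrightarrow> V \<in> orbit_seqs X f (U m)"
    proof
      fix m
      obtain \<rho> where rho: "\<rho> > 0" "\<forall>A\<in>U m. \<forall>B\<in>U m. A \<noteq> B \<longrightarrow> (\<forall>x\<in>A. \<forall>y\<in>B. dist x y \<ge> \<rho>)"
        using spec[OF sepa, of m] by (elim exE conjE) blast
      obtain \<delta> where d: "\<delta> > 0" "\<forall>k (x::nat \<Rightarrow> 'a).
         (\<forall>i\<le>k. x i \<in> X) \<and> (\<forall>i<k. dist (f (x i)) (x (Suc i)) < \<delta>) \<longrightarrow>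
         (\<exists>z\<in>X. \<forall>i\<le>k. dist ((f ^^ i) z) (x i) < \<rho>)"
        using fs[unfolded finite_shadowing_def, rule_format, OF rho(1)] by (elim exE conjE) blast
      obtain N where N: "\<forall>n\<ge>N. \<forall>A\<in>U n. \<forall>x\<in>A. \<forall>y\<in>A. dist x y \<le> \<delta>/2"
        using diam[rule_format, OF half_gt_zero[OF d(1)]] by (elim exE) blast
      define n where "n = Suc (max N m)"
      have "n > m" "n \<ge> N" unfolding n_def by auto
      have "\<forall>A\<in>pseudo_orbit_seqs f (U n). \<forall>V.
        (\<forall>i. V i \<in> U m \<and> A i \<subseteq> V i) \<longrightarrow> V \<in> orbit_seqs X f (U m)"
      proof (intro ballI allI impI)
        fix A V assume A: "A \<in> pseudo_orbit_seqs f (U n)" and V: "\<forall>i. V i \<in> U m \<and> A i \<subseteq> V i"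
        have AU: "\<And>i. A i \<in> U n" using A unfolding pseudo_orbit_seqs_def by blast
        have "\<forall>i. \<exists>y. y \<in> A i \<and> f y \<in> A (Suc i)"
          using A unfolding pseudo_orbit_seqs_def by blast
        then obtain y where y: "\<And>i. y i \<in> A i" "\<And>i. f (y i) \<in> A (Suc i)" by metis
        have yX: "\<And>i. y i \<in> X" using y(1) AU ds_sub[OF ds] by blast
        have ydist: "\<And>i. dist (f (y i)) (y (Suc i)) < \<delta>"
        proof -
          fix i
          have "dist (f (y i)) (y (Suc i)) \<le> \<delta>/2"
            using N[rule_format, OF \<open>n \<ge> N\<close> AU[of "Suc i"] y(2)[of i] y(1)[of "Suc i"]] .
          then show "dist (f (y i)) (y (Suc i)) < \<delta>" using d(1) by linarith
        qed
        show "V \<in> orbit_seqs X f (U m)"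
          unfolding orbit_seqs_def
        proof (intro CollectI conjI allI)
          fix i show "V i \<in> U m" using V by blast
        next
          fix k
          obtain z where z: "z \<in> X" "\<forall>i\<le>k. dist ((f ^^ i) z) (y i) < \<rho>"
            using d(2)[rule_format, of k y] yX ydist by blast
          have "\<forall>i\<le>k. (f ^^ i) z \<in> V i"
          proof (intro allI impI)
            fix i assume "i \<le> k"
            show "(f ^^ i) z \<in> V i"
              using sep_same[OF ds rho(2) funpow_in[OF fX z(1)] _ _ z(2)[rule_format, OF \<open>i \<le> k\<close>]]
                V y(1) by blast
          qed
          then show "\<exists>x\<in>X. \<forall>i\<le>k. (f ^^ i) x \<in> V i" using z(1) by blast
        qed
      qed
      then show "\<exists>n>m. \<forall>A\<in>pseudo_orbit_seqs f (U n). \<forall>V.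
        (\<forall>i. V i \<in> U m \<and> A i \<subseteq> V i) \<longrightarrow> V \<in> orbit_seqs X f (U m)"
        using \<open>n > m\<close> by blast
    qed
  next
    assume H: "\<forall>m. \<exists>n>m. \<forall>A\<in>pseudo_orbit_seqs f (U n). \<forall>V.
        (\<forall>i. V i \<in> U m \<and> A i \<subseteq> V i) \<longrightarrow> V \<in> orbit_seqs X f (U m)"
    show "finite_shadowing X f"
      unfolding finite_shadowing_def
    proof (intro allI impI)
      fix \<epsilon> :: real assume "\<epsilon> > 0"
      obtain N where N: "\<forall>n\<ge>N. \<forall>A\<in>U n. \<forall>x\<in>A. \<forall>y\<in>A. dist x y \<le> \<epsilon>/2"
        using diam[rule_format, OF half_gt_zero[OF \<open>\<epsilon> > 0\<close>]] by (elim exE) blast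
      obtain n where n: "n > N" "\<forall>A\<in>pseudo_orbit_seqs f (U n). \<forall>V.
        (\<forall>i. V i \<in> U N \<and> A i \<subseteq> V i) \<longrightarrow> V \<in> orbit_seqs X f (U N)"
        using spec[OF H, of N] by (elim exE conjE) blast
      obtain \<rho> where rho: "\<rho> > 0" "\<forall>A\<in>U n. \<forall>B\<in>U n. A \<noteq> B \<longrightarrow> (\<forall>x\<in>A. \<forall>y\<in>B. dist x y \<ge> \<rho>)"
        using spec[OF sepa, of n] by (elim exE conjE) blast
      show "\<exists>\<delta>>0. \<forall>k x. (\<forall>i\<le>k. x i \<in> X) \<and> (\<forall>i<k. dist (f (x i)) (x (Suc i)) < \<delta>) \<longrightarrow>
           (\<exists>z\<in>X. \<forall>i\<le>k. dist ((f ^^ i) z) (x i) < \<epsilon>)"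
      proof (intro exI[of _ \<rho>] conjI allI impI)
        show "\<rho> > 0" by fact
        fix k and x :: "nat \<Rightarrow> 'a"
        assume kx: "(\<forall>i\<le>k. x i \<in> X) \<and> (\<forall>i<k. dist (f (x i)) (x (Suc i)) < \<rho>)"
        define p where "p i = (if i \<le> k then x i else (f ^^ (i - k)) (x k))" for i
        have pge: "p i = (f ^^ (i - k)) (x k)" if "i \<ge> k" for i
          using that unfolding p_def by (cases "i = k") auto
        have pX: "p i \<in> X" for i
          unfolding p_def using kx funpow_in[OF fX] by auto
        define A where "A i = (SOME B. B \<in> U n \<and> p i \<in> B)" for i
        have A: "A i \<in> U n \<and> p i \<in> A i" for i
          unfolding A_def by (rule someI_ex) (use ds_cover[OF ds pX] in blast)
        define V where "V i = (SOME B. B \<in> U N \<and> A i \<subseteq> B)" for i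
        have V: "V i \<in> U N \<and> A i \<subseteq> V i" for i
          unfolding V_def by (rule someI_ex) (use ds_refines_le[OF ds _ conjunct1[OF A], of N] n(1) in auto)
        have fp: "f (p i) \<in> A (Suc i)" for i
        proof (cases "i < k")
          case True
          have "p i = x i" "p (Suc i) = x (Suc i)" using True unfolding p_def by auto
          moreover have "f (x i) \<in> X" using kx True fX by auto
          moreover have "x (Suc i) \<in> A (Suc i)" using A[of "Suc i"] \<open>p (Suc i) = x (Suc i)\<close> by simp
          moreover have "dist (f (x i)) (x (Suc i)) < \<rho>" using kx True by blast
          ultimately show ?thesis
            using sep_same[OF ds rho(2), of "f (x i)" "x (Suc i)" "A (Suc i)"] A[of "Suc i"] by simp
        next
          case False
          then have "p (Suc i) = (f ^^ (Suc i - k)) (x k)" "p i = (f ^^ (i - k)) (x k)"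
            using pge by auto
          moreover have "Suc i - k = Suc (i - k)" using False by auto
          ultimately have "p (Suc i) = f (p i)" by simp
          then show ?thesis using A by metis
        qed
        have "A \<in> pseudo_orbit_seqs f (U n)"
          unfolding pseudo_orbit_seqs_def using A fp by blast
        then have "V \<in> orbit_seqs X f (U N)" using n(2) V by blast
        then obtain z where z: "z \<in> X" "\<forall>i\<le>k. (f ^^ i) z \<in> V i"
          unfolding orbit_seqs_def by blast
        have "\<forall>i\<le>k. dist ((f ^^ i) z) (x i) < \<epsilon>"
        proof (intro allI impI)
          fix i assume "i \<le> k"
          then have "x i \<in> V i" using A V unfolding p_def by (metis subsetD)
          then have "dist ((f ^^ i) z) (x i) \<le> \<epsilon>/2"
            using N[rule_format, of N "V i" "(f ^^ i) z" "x i"] V z(2) \<open>i \<le> k\<close> by blast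
          then show "dist ((f ^^ i) z) (x i) < \<epsilon>" using \<open>\<epsilon> > 0\<close> by linarith
        qed
        then show "\<exists>z\<in>X. \<forall>i\<le>k. dist ((f ^^ i) z) (x i) < \<epsilon>" using z(1) by blast
      qed
    qed
  qed
qed

end
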